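(* Let $T>0$ and let $f$ be a Lipschitz function on $\mathcal D=[0,1]^2$ with $f(0,0)=f(1,1)=0$. Let $u_N(t,x)=\mathbb{E}(f(x^t)\mid x^0=x)$ for the process $x^t$ described in the context (extended to all $x\in\mathcal D$ by interpolation in space). There exists a constant $C$ depending on the Lipschitz constant $\|f\|_{\mathrm{lip}}$ of $f$ and on $T$, but not on $N$, such that for all $x,y\in\mathcal D$ and $s,t\in[0,T]$, $$|u_N(t,x)-u_N(t,y)|\le C|x-y|,\qquad |u_N(t,x)-u_N(s,x)|\le C|t-s|^{1/2}.$$
   Context: Two patches have hosting capacities $N_1=N$ and $N_2=dN$, with $d=N_2/N_1\in(0,1]$ fixed; $\kappa>0$ fixed, $\delta t=1/N$, $\kappa\delta t\le 1$. Let $M=\begin{pmatrix} d & -d\\ -1 & 1\end{pmatrix}$ and $A=\mathrm{Id}-\frac{\kappa}{N}M$. For a function $g$ on $\mathcal D$ define $$B_N(g)(x)=\sum_{j_1=0}^{N_1}\sum_{j_2=0}^{N_2}\binom{N_1}{j_1}\binom{N_2}{j_2}x_1^{j_1}(1-x_1)^{N_1-j_1}x_2^{j_2}(1-x_2)^{N_2-j_2}\,g\!\left(\tfrac{j_1}{N_1},\tfrac{j_2}{N_2}\right).$$ $(x^n)_{n\ge0}$ is the Markov chain in $\mathcal D$ with transition kernel $\mathbb{E}(f(x^{n+1})\mid x^n=x)=B_N(f\circ A)(x)$, and $x^t$ is the continuous piecewise linear-in-time process with $x^t=x^n$ at $t=n\delta t$. *)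

theory Defs
  imports "HOL-Analysis.Analysis"
begin

definition dom2 :: "(real \<times> real) set" where
  "dom2 = {0..1} \<times> {0..1}"

definition bern_w :: "nat \<Rightarrow> nat \<Rightarrow> real \<times> real \<Rightarrow> nat \<Rightarrow> nat \<Rightarrow> real" where
  "bern_w N1 N2 x j1 j2 =
     real (N1 choose j1) * fst x ^ j1 * (1 - fst x) ^ (N1 - j1) *
     real (N2 choose j2) * snd x ^ j2 * (1 - snd x) ^ (N2 - j2)"

definition bernstein2 :: "nat \<Rightarrow> nat \<Rightarrow> (real \<times> real \<Rightarrow> real) \<Rightarrow> real \<times> real \<Rightarrow> real" where
  "bernstein2 N1 N2 g x =
     (\<Sum>j1\<le>N1. \<Sum>j2\<le>N2. bern_w N1 N2 x j1 j2 * g (real j1 / real N1, real j2 / real N2))"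

text \<open>A = Id - (kappa/N) M with M = [[d,-d],[-1,1]], N = N1.\<close>
definition matA :: "real \<Rightarrow> real \<Rightarrow> nat \<Rightarrow> real \<times> real \<Rightarrow> real \<times> real" where
  "matA d \<kappa> N y =
     (fst y - \<kappa> / real N * (d * fst y - d * snd y),
      snd y - \<kappa> / real N * (- fst y + snd y))"

text \<open>One-step transition operator: E(g(x^{n+1}) | x^n = x) = B_N(g o A)(x).\<close>
definition step_op :: "real \<Rightarrow> real \<Rightarrow> nat \<Rightarrow> nat \<Rightarrow> (real \<times> real \<Rightarrow> real) \<Rightarrow> real \<times> real \<Rightarrow> real" where
  "step_op d \<kappa> N1 N2 g = bernstein2 N1 N2 (g \<circ> matA d \<kappa> N1)"

text \<open>E( g((1-theta) x^n + theta x^{n+1}) | x^n = x ).\<close>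
definition interp_op :: "real \<Rightarrow> real \<Rightarrow> nat \<Rightarrow> nat \<Rightarrow> real \<Rightarrow> (real \<times> real \<Rightarrow> real) \<Rightarrow> real \<times> real \<Rightarrow> real" where
  "interp_op d \<kappa> N1 N2 \<theta> g x =
     (\<Sum>j1\<le>N1. \<Sum>j2\<le>N2. bern_w N1 N2 x j1 j2 *
        g ((1 - \<theta>) *\<^sub>R x + \<theta> *\<^sub>R matA d \<kappa> N1 (real j1 / real N1, real j2 / real N2)))"

text \<open>u_N(t,x) = E(f(x^t) | x^0 = x) for the piecewise linear interpolated chain, delta t = 1/N1:
  with t = (n + theta) delta t, x^t = (1-theta) x^n + theta x^{n+1}.\<close>
definition uN :: "real \<Rightarrow> real \<Rightarrow> nat \<Rightarrow> nat \<Rightarrow> (real \<times> real \<Rightarrow> real) \<Rightarrow> real \<Rightarrow> real \<times> real \<Rightarrow> real" where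
  "uN d \<kappa> N1 N2 f t x =
     (let n = nat \<lfloor>t * real N1\<rfloor>; \<theta> = t * real N1 - real n
      in (step_op d \<kappa> N1 N2 ^^ n) (interp_op d \<kappa> N1 N2 \<theta> f) x)"

end

theory Submission
  imports Defs
begin



lemma Bernstein_Suc_Suc:
  "Bernstein (Suc n) (Suc k) x = (1 - x) * Bernstein n (Suc k) x + x * Bernstein n k x"
proof (cases "k < n")
  case True
  then have e: "Suc n - Suc k = Suc (n - Suc k)" "n - k = Suc (n - Suc k)" by auto
  show ?thesis unfolding Bernstein_def e by (simp add: algebra_simps)
next
  case False
  then have "n choose Suc k = 0" by simp
  moreover have "Suc n - Suc k = n - k" by simp
  ultimately show ?thesis unfolding Bernstein_def by (simp add: algebra_simps)
qed

lemma Bernstein_Suc_0: "Bernstein (Suc n) 0 x = (1 - x) * Bernstein n 0 x"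
  by (simp add: Bernstein_def)

lemma Bernstein_out: "k > n \<Longrightarrow> Bernstein n k x = 0"
  by (simp add: Bernstein_def)

lemma bern_rec:
  "(\<Sum>k\<le>Suc n. c k * Bernstein (Suc n) k x) =
     (1 - x) * (\<Sum>k\<le>n. c k * Bernstein n k x) + x * (\<Sum>k\<le>n. c (Suc k) * Bernstein n k x)"
proof -
  have "(\<Sum>k\<le>Suc n. c k * Bernstein (Suc n) k x) =
        c 0 * Bernstein (Suc n) 0 x + (\<Sum>k\<le>n. c (Suc k) * Bernstein (Suc n) (Suc k) x)"
    by (subst sum.atMost_Suc_shift) simp
  also have "\<dots> = c 0 * ((1 - x) * Bernstein n 0 x) +
      (\<Sum>k\<le>n. c (Suc k) * ((1 - x) * Bernstein n (Suc k) x)) +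
      (\<Sum>k\<le>n. c (Suc k) * (x * Bernstein n k x))"
    by (simp add: Bernstein_Suc_Suc Bernstein_Suc_0 distrib_left sum.distrib)
  also have "c 0 * ((1 - x) * Bernstein n 0 x) +
      (\<Sum>k\<le>n. c (Suc k) * ((1 - x) * Bernstein n (Suc k) x)) =
      (1 - x) * (\<Sum>k\<le>Suc n. c k * Bernstein n k x)"
    by (subst sum.atMost_Suc_shift) (simp add: sum_distrib_left algebra_simps)
  also have "(\<Sum>k\<le>Suc n. c k * Bernstein n k x) = (\<Sum>k\<le>n. c k * Bernstein n k x)"
    by (simp add: Bernstein_out)
  also have "(\<Sum>k\<le>n. c (Suc k) * (x * Bernstein n k x)) = x * (\<Sum>k\<le>n. c (Suc k) * Bernstein n k x)"
    by (simp add: sum_distrib_left algebra_simps)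
  finally show ?thesis .
qed

lemma convex_bound:
  fixes w a :: "nat \<Rightarrow> real"
  assumes "\<And>k. k \<in> A \<Longrightarrow> 0 \<le> w k" "sum w A = 1" "\<And>k. k \<in> A \<Longrightarrow> \<bar>a k\<bar> \<le> M"
  shows "\<bar>\<Sum>k\<in>A. w k * a k\<bar> \<le> M"
proof -
  have "\<bar>\<Sum>k\<in>A. w k * a k\<bar> \<le> (\<Sum>k\<in>A. \<bar>w k * a k\<bar>)" by (rule sum_abs)
  also have "\<dots> \<le> (\<Sum>k\<in>A. w k * M)"
    by (intro sum_mono) (simp add: abs_mult assms mult_left_mono)
  also have "\<dots> = M" using assms(2) by (simp add: sum_distrib_right[symmetric])
  finally show ?thesis .
qed

lemma bern_bound:
  assumes "0 \<le> x" "x \<le> 1" "\<And>k. k \<le> n \<Longrightarrow> \<bar>c k\<bar> \<le> M"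
  shows "\<bar>\<Sum>k\<le>n. c k * Bernstein n k x\<bar> \<le> M"
proof -
  have "\<bar>\<Sum>k\<le>n. Bernstein n k x * c k\<bar> \<le> M"
    by (rule convex_bound) (use assms in \<open>auto simp: Bernstein_nonneg\<close>)
  then show ?thesis by (simp add: mult.commute)
qed

lemma bern_lip:
  assumes "\<And>k. k < n \<Longrightarrow> \<bar>c (Suc k) - c k\<bar> \<le> \<delta>"
    and "0 \<le> x" "x \<le> 1" "0 \<le> y" "y \<le> 1"
  shows "\<bar>(\<Sum>k\<le>n. c k * Bernstein n k x) - (\<Sum>k\<le>n. c k * Bernstein n k y)\<bar> \<le> real n * \<delta> * \<bar>x - y\<bar>"
  using assms(1)
proof (induction n arbitrary: c)
  case 0
  then show ?case by (simp add: Bernstein_def)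
next
  case (Suc n)
  define P where "P z = (\<Sum>k\<le>n. c k * Bernstein n k z)" for z
  define Q where "Q z = (\<Sum>k\<le>n. c (Suc k) * Bernstein n k z)" for z
  have hP: "\<bar>P x - P y\<bar> \<le> real n * \<delta> * \<bar>x - y\<bar>"
    unfolding P_def by (rule Suc.IH) (use Suc.prems in auto)
  have hQ: "\<bar>Q x - Q y\<bar> \<le> real n * \<delta> * \<bar>x - y\<bar>"
    unfolding Q_def by (rule Suc.IH) (use Suc.prems in auto)
  have "Q y - P y = (\<Sum>k\<le>n. (c (Suc k) - c k) * Bernstein n k y)"
    unfolding P_def Q_def by (simp add: sum_subtractf[symmetric] algebra_simps)
  also have "\<bar>\<dots>\<bar> \<le> \<delta>"
    by (rule bern_bound) (use assms Suc.prems in auto)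
  finally have hD: "\<bar>Q y - P y\<bar> \<le> \<delta>" .
  have eq: "(\<Sum>k\<le>Suc n. c k * Bernstein (Suc n) k x) - (\<Sum>k\<le>Suc n. c k * Bernstein (Suc n) k y)
     = (1 - x) * (P x - P y) + x * (Q x - Q y) + (x - y) * (Q y - P y)"
    unfolding bern_rec P_def Q_def by (simp add: algebra_simps)
  have "\<bar>(1 - x) * (P x - P y) + x * (Q x - Q y) + (x - y) * (Q y - P y)\<bar>
      \<le> (1 - x) * \<bar>P x - P y\<bar> + x * \<bar>Q x - Q y\<bar> + \<bar>x - y\<bar> * \<bar>Q y - P y\<bar>"
    using assms by (simp add: abs_mult abs_triangle_ineq order_trans[OF abs_triangle_ineq add_mono])
  also have "\<dots> \<le> (1 - x) * (real n * \<delta> * \<bar>x - y\<bar>) + x * (real n * \<delta> * \<bar>x - y\<bar>) + \<bar>x - y\<bar> * \<delta>"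
    using assms hP hQ hD by (intro add_mono mult_left_mono) auto
  also have "\<dots> = real (Suc n) * \<delta> * \<bar>x - y\<bar>" by (simp add: algebra_simps)
  finally show ?case using eq by simp
qed




lemma bern_w_eq: "bern_w N1 N2 x j1 j2 = Bernstein N1 j1 (fst x) * Bernstein N2 j2 (snd x)"
  by (simp add: bern_w_def Bernstein_def)

lemma sum_bern_w: "(\<Sum>j1\<le>N1. \<Sum>j2\<le>N2. bern_w N1 N2 x j1 j2) = 1"
  by (simp add: bern_w_eq sum_distrib_left[symmetric] sum_distrib_right[symmetric])

lemma dom2_iff: "x \<in> dom2 \<longleftrightarrow> 0 \<le> fst x \<and> fst x \<le> 1 \<and> 0 \<le> snd x \<and> snd x \<le> 1"
  by (cases x) (auto simp: dom2_def)

lemma bern_w_nonneg: "x \<in> dom2 \<Longrightarrow> 0 \<le> bern_w N1 N2 x j1 j2"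
  by (simp add: bern_w_eq Bernstein_nonneg dom2_iff)

lemma bern2_swap1:
  "bernstein2 N1 N2 g x = (\<Sum>j2\<le>N2. Bernstein N2 j2 (snd x) *
      (\<Sum>j1\<le>N1. g (real j1 / real N1, real j2 / real N2) * Bernstein N1 j1 (fst x)))"
  unfolding bernstein2_def bern_w_eq
  by (subst sum.swap) (simp add: sum_distrib_left algebra_simps)

lemma bern2_swap2:
  "bernstein2 N1 N2 g x = (\<Sum>j1\<le>N1. Bernstein N1 j1 (fst x) *
      (\<Sum>j2\<le>N2. g (real j1 / real N1, real j2 / real N2) * Bernstein N2 j2 (snd x)))"
  unfolding bernstein2_def bern_w_eq
  by (simp add: sum_distrib_left algebra_simps)

definition wlip :: "real \<Rightarrow> real \<Rightarrow> (real \<times> real \<Rightarrow> real) \<Rightarrow> bool" where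
  "wlip d K g \<longleftrightarrow> 0 \<le> K \<and> (\<forall>a\<in>dom2. \<forall>b\<in>dom2.
      \<bar>g a - g b\<bar> \<le> K * (\<bar>fst a - fst b\<bar> + d * \<bar>snd a - snd b\<bar>))"

lemma grid_in: "j1 \<le> N1 \<Longrightarrow> j2 \<le> N2 \<Longrightarrow> 0 < N1 \<Longrightarrow> 0 < N2 \<Longrightarrow>
   (real j1 / real N1, real j2 / real N2) \<in> dom2"
  by (simp add: dom2_iff)

lemma bern2_wlip:
  assumes "wlip d K g" "0 < N1" "0 < N2" "0 \<le> d" "x \<in> dom2" "y \<in> dom2"
  shows "\<bar>bernstein2 N1 N2 g x - bernstein2 N1 N2 g y\<bar>
           \<le> K * (\<bar>fst x - fst y\<bar> + d * \<bar>snd x - snd y\<bar>)"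
proof -
  have K: "0 \<le> K" using assms(1) by (simp add: wlip_def)
  have gl: "\<bar>g a - g b\<bar> \<le> K * (\<bar>fst a - fst b\<bar> + d * \<bar>snd a - snd b\<bar>)"
    if "a \<in> dom2" "b \<in> dom2" for a b using assms(1) that by (simp add: wlip_def)
  define z where "z = (fst y, snd x)"
  have z: "z \<in> dom2" using assms by (simp add: z_def dom2_iff)
  define p where "p j2 t = (\<Sum>j1\<le>N1. g (real j1 / real N1, real j2 / real N2) * Bernstein N1 j1 t)" for j2 t
  have "bernstein2 N1 N2 g x - bernstein2 N1 N2 g z =
     (\<Sum>j2\<le>N2. Bernstein N2 j2 (snd x) * (p j2 (fst x) - p j2 (fst y)))"
    unfolding bern2_swap1 p_def z_def by (simp add: sum_subtractf[symmetric] right_diff_distrib[symmetric])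
  also have "\<bar>\<dots>\<bar> \<le> K * \<bar>fst x - fst y\<bar>"
  proof (rule convex_bound)
    fix j2 assume j2: "j2 \<in> {..N2}"
    have "\<bar>p j2 (fst x) - p j2 (fst y)\<bar> \<le> real N1 * (K / real N1) * \<bar>fst x - fst y\<bar>"
      unfolding p_def
    proof (rule bern_lip)
      fix k assume k: "k < N1"
      have "\<bar>g (real (Suc k) / real N1, real j2 / real N2) - g (real k / real N1, real j2 / real N2)\<bar>
          \<le> K * (\<bar>real (Suc k) / real N1 - real k / real N1\<bar> + d * 0)"
        using gl[OF grid_in[of "Suc k" N1 j2 N2] grid_in[of k N1 j2 N2]] k j2 assms by simp
      also have "\<dots> = K / real N1" using assms by (simp add: diff_divide_distrib[symmetric])
      finally show "\<bar>g (real (Suc k) / real N1, real j2 / real N2) - g (real k / real N1, real j2 / real N2)\<bar>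
          \<le> K / real N1" .
    qed (use assms in \<open>auto simp: dom2_iff\<close>)
    then show "\<bar>p j2 (fst x) - p j2 (fst y)\<bar> \<le> K * \<bar>fst x - fst y\<bar>" using assms by simp
  qed (use assms in \<open>auto simp: Bernstein_nonneg dom2_iff\<close>)
  finally have h1: "\<bar>bernstein2 N1 N2 g x - bernstein2 N1 N2 g z\<bar> \<le> K * \<bar>fst x - fst y\<bar>" .
  define q where "q j1 t = (\<Sum>j2\<le>N2. g (real j1 / real N1, real j2 / real N2) * Bernstein N2 j2 t)" for j1 t
  have "bernstein2 N1 N2 g z - bernstein2 N1 N2 g y =
     (\<Sum>j1\<le>N1. Bernstein N1 j1 (fst y) * (q j1 (snd x) - q j1 (snd y)))"
    unfolding bern2_swap2 q_def z_def by (simp add: sum_subtractf[symmetric] right_diff_distrib[symmetric])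
  also have "\<bar>\<dots>\<bar> \<le> K * d * \<bar>snd x - snd y\<bar>"
  proof (rule convex_bound)
    fix j1 assume j1: "j1 \<in> {..N1}"
    have "\<bar>q j1 (snd x) - q j1 (snd y)\<bar> \<le> real N2 * (K * d / real N2) * \<bar>snd x - snd y\<bar>"
      unfolding q_def
    proof (rule bern_lip)
      fix k assume k: "k < N2"
      have "\<bar>g (real j1 / real N1, real (Suc k) / real N2) - g (real j1 / real N1, real k / real N2)\<bar>
          \<le> K * (0 + d * \<bar>real (Suc k) / real N2 - real k / real N2\<bar>)"
        using gl[OF grid_in[of j1 N1 "Suc k" N2] grid_in[of j1 N1 k N2]] k j1 assms by simp
      also have "\<dots> = K * d / real N2" using assms by (simp add: diff_divide_distrib[symmetric])
      finally show "\<bar>g (real j1 / real N1, real (Suc k) / real N2) - g (real j1 / real N1, real k / real N2)\<bar>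
          \<le> K * d / real N2" .
    qed (use assms in \<open>auto simp: dom2_iff\<close>)
    then show "\<bar>q j1 (snd x) - q j1 (snd y)\<bar> \<le> K * d * \<bar>snd x - snd y\<bar>" using assms by simp
  qed (use assms in \<open>auto simp: Bernstein_nonneg dom2_iff\<close>)
  finally have h2: "\<bar>bernstein2 N1 N2 g z - bernstein2 N1 N2 g y\<bar> \<le> K * d * \<bar>snd x - snd y\<bar>" .
  show ?thesis using h1 h2 by (simp add: algebra_simps)
qed




definition posop :: "((real \<times> real \<Rightarrow> real) \<Rightarrow> (real \<times> real \<Rightarrow> real)) \<Rightarrow> bool" where
  "posop P \<longleftrightarrow> (\<forall>g h. P (\<lambda>z. g z + h z) = (\<lambda>z. P g z + P h z)) \<and>
     (\<forall>c g. P (\<lambda>z. c * g z) = (\<lambda>z. c * P g z)) \<and>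
     (\<forall>c. P (\<lambda>z. c) = (\<lambda>z. c)) \<and>
     (\<forall>g h. (\<forall>z\<in>dom2. g z \<le> h z) \<longrightarrow> (\<forall>x\<in>dom2. P g x \<le> P h x))"

lemma posop_id: "posop id" by (simp add: posop_def)

lemma posop_comp: "posop P \<Longrightarrow> posop Q \<Longrightarrow> posop (P \<circ> Q)"
  unfolding posop_def comp_def by metis

lemma posop_funpow: "posop P \<Longrightarrow> posop (P ^^ m)"
  by (induction m) (auto simp: posop_id posop_comp)

lemma posop_add: "posop P \<Longrightarrow> P (\<lambda>z. g z + h z) x = P g x + P h x"
  unfolding posop_def by metis
lemma posop_scale: "posop P \<Longrightarrow> P (\<lambda>z. c * g z) x = c * P g x"
  unfolding posop_def by metis
lemma posop_const: "posop P \<Longrightarrow> P (\<lambda>z. c) x = c"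
  unfolding posop_def by metis
lemma posop_mono: "posop P \<Longrightarrow> (\<And>z. z \<in> dom2 \<Longrightarrow> g z \<le> h z) \<Longrightarrow> x \<in> dom2 \<Longrightarrow> P g x \<le> P h x"
  unfolding posop_def by metis

lemma posop_diff: "posop P \<Longrightarrow> P (\<lambda>z. g z - h z) x = P g x - P h x"
proof -
  assume P: "posop P"
  have e: "(\<lambda>z. g z - h z) = (\<lambda>z. g z + (-1) * h z)" by simp
  have a: "P (\<lambda>z. g z + (-1) * h z) x = P g x + P (\<lambda>z. (-1) * h z) x" by (rule posop_add[OF P])
  have b: "P (\<lambda>z. (-1) * h z) x = (-1) * P h x" by (rule posop_scale[OF P])
  show ?thesis unfolding e a b by simp
qed

lemma posop_abs: "posop P \<Longrightarrow> x \<in> dom2 \<Longrightarrow> \<bar>P g x\<bar> \<le> P (\<lambda>z. \<bar>g z\<bar>) x"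
proof -
  assume P: "posop P" and x: "x \<in> dom2"
  have "P g x \<le> P (\<lambda>z. \<bar>g z\<bar>) x" by (rule posop_mono[OF P _ x]) simp
  moreover have "P (\<lambda>z. (-1) * \<bar>g z\<bar>) x \<le> P g x" by (rule posop_mono[OF P _ x]) simp
  moreover have "P (\<lambda>z. (-1) * \<bar>g z\<bar>) x = (-1) * P (\<lambda>z. \<bar>g z\<bar>) x" by (rule posop_scale[OF P])
  ultimately show ?thesis by linarith
qed

lemma posop_jensen: "posop P \<Longrightarrow> x \<in> dom2 \<Longrightarrow> (P g x)\<^sup>2 \<le> P (\<lambda>z. (g z)\<^sup>2) x"
proof -
  assume P: "posop P" and x: "x \<in> dom2"
  define a where "a = P g x"
  have "0 \<le> P (\<lambda>z. (g z - a)\<^sup>2) x"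
    using posop_mono[OF P _ x, of "\<lambda>z. 0" "\<lambda>z. (g z - a)\<^sup>2"] P by (simp add: posop_const)
  also have "P (\<lambda>z. (g z - a)\<^sup>2) x = P (\<lambda>z. (g z)\<^sup>2 + ((-2 * a) * g z + a\<^sup>2)) x"
    by (simp add: power2_eq_square algebra_simps)
  also have "\<dots> = P (\<lambda>z. (g z)\<^sup>2) x + P (\<lambda>z. (-2 * a) * g z + a\<^sup>2) x" by (rule posop_add[OF P])
  also have "P (\<lambda>z. (-2 * a) * g z + a\<^sup>2) x = P (\<lambda>z. (-2 * a) * g z) x + P (\<lambda>z. a\<^sup>2) x"
    by (rule posop_add[OF P])
  also have "P (\<lambda>z. (-2 * a) * g z) x = (-2 * a) * P g x" by (rule posop_scale[OF P])
  also have "P (\<lambda>z. a\<^sup>2) x = a\<^sup>2" by (rule posop_const[OF P])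
  finally show ?thesis by (simp add: a_def power2_eq_square)
qed

lemma posop_sqrt: "posop P \<Longrightarrow> x \<in> dom2 \<Longrightarrow> P g x \<le> sqrt (P (\<lambda>z. (g z)\<^sup>2) x)"
  using posop_jensen real_le_rsqrt by blast

lemma cvx01: "0 \<le> e \<Longrightarrow> e \<le> 1 \<Longrightarrow> 0 \<le> a \<Longrightarrow> a \<le> 1 \<Longrightarrow> 0 \<le> b \<Longrightarrow> b \<le> 1 \<Longrightarrow>
   0 \<le> (1 - e) * a + e * b \<and> (1 - e) * a + e * b \<le> (1::real)"
proof -
  assume h: "0 \<le> e" "e \<le> 1" "0 \<le> a" "a \<le> 1" "0 \<le> b" "b \<le> 1"
  have "(1 - e) * a \<le> (1 - e) * 1" using h by (intro mult_left_mono) auto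
  moreover have "e * b \<le> e * 1" using h by (intro mult_left_mono) auto
  ultimately show ?thesis using h by auto
qed

lemma lin_diff: "(1 - e) * a + e * b - ((1 - e) * c + e * w) = (1 - e) * (a - c) + e * (b - (w::real))"
  by (simp add: algebra_simps)
lemma lin_diff2: "e * a + (1 - e) * b - (e * c + (1 - e) * w) = e * (a - c) + (1 - e) * (b - (w::real))"
  by (simp add: algebra_simps)

lemma abs_cvx: "0 \<le> e \<Longrightarrow> e \<le> 1 \<Longrightarrow> \<bar>(1 - e) * u + e * v\<bar> \<le> (1 - e) * \<bar>u\<bar> + e * \<bar>v::real\<bar>"
proof -
  assume "0 \<le> e" "e \<le> 1"
  then have "\<bar>(1 - e) * u\<bar> = (1 - e) * \<bar>u\<bar>" "\<bar>e * v\<bar> = e * \<bar>v\<bar>" by (auto simp: abs_mult)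
  then show ?thesis using abs_triangle_ineq[of "(1 - e) * u" "e * v"] by linarith
qed

locale setting =
  fixes d \<kappa> :: real and N1 N2 :: nat
  assumes d_pos: "0 < d" and d_le: "d \<le> 1" and k_pos: "0 < \<kappa>" and N1_pos: "0 < N1"
    and N2_eq: "real N2 = d * real N1" and kN: "\<kappa> / real N1 \<le> 1"
begin

lemma N2_pos: "0 < N2"
proof -
  have "0 < d * real N1" using d_pos N1_pos by simp
  then show ?thesis using N2_eq by simp
qed

abbreviation "Am \<equiv> matA d \<kappa> N1"
abbreviation "S \<equiv> step_op d \<kappa> N1 N2"
abbreviation "e1 \<equiv> \<kappa> * d / real N1"
abbreviation "e2 \<equiv> \<kappa> / real N1"

lemma e2_ge: "0 \<le> e2" using k_pos N1_pos by simp
lemma e1_eq: "e1 = d * e2" by simp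
lemma e1_ge: "0 \<le> e1" using k_pos N1_pos d_pos by simp
lemma e1_le: "e1 \<le> 1"
proof -
  have "d * e2 \<le> 1 * 1" using d_le kN d_pos e2_ge by (intro mult_mono) auto
  moreover have "e1 = d * e2" by simp
  ultimately show ?thesis by linarith
qed

lemma Am_fst: "fst (Am y) = (1 - e1) * fst y + e1 * snd y"
  by (simp add: matA_def algebra_simps)
lemma Am_snd: "snd (Am y) = e2 * fst y + (1 - e2) * snd y"
  by (simp add: matA_def algebra_simps)

lemma Am_dom: "y \<in> dom2 \<Longrightarrow> Am y \<in> dom2"
  unfolding dom2_iff Am_fst Am_snd
  using cvx01[OF e1_ge e1_le, of "fst y" "snd y"] cvx01[OF e2_ge kN, of "snd y" "fst y"]
  by (auto simp: algebra_simps)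

lemma Am_rho: "\<bar>fst (Am a) - fst (Am b)\<bar> + d * \<bar>snd (Am a) - snd (Am b)\<bar>
    \<le> \<bar>fst a - fst b\<bar> + d * \<bar>snd a - snd b\<bar>"
proof -
  define u where "u = fst a - fst b"
  define v where "v = snd a - snd b"
  have f: "fst (Am a) - fst (Am b) = (1 - e1) * u + e1 * v"
    unfolding Am_fst u_def v_def by (rule lin_diff)
  have s: "snd (Am a) - snd (Am b) = e2 * u + (1 - e2) * v"
    unfolding Am_snd u_def v_def by (rule lin_diff2)
  have 1: "\<bar>(1 - e1) * u + e1 * v\<bar> \<le> (1 - e1) * \<bar>u\<bar> + e1 * \<bar>v\<bar>"
    using e1_ge e1_le by (rule abs_cvx)
  have 2: "\<bar>e2 * u + (1 - e2) * v\<bar> \<le> e2 * \<bar>u\<bar> + (1 - e2) * \<bar>v\<bar>"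
    using abs_cvx[OF e2_ge kN, of v u] by (simp add: add.commute)
  have "\<bar>(1 - e1) * u + e1 * v\<bar> + d * \<bar>e2 * u + (1 - e2) * v\<bar>
      \<le> (1 - e1) * \<bar>u\<bar> + e1 * \<bar>v\<bar> + d * (e2 * \<bar>u\<bar> + (1 - e2) * \<bar>v\<bar>)"
    using 1 2 d_pos by (intro add_mono mult_left_mono) auto
  also have "\<dots> = \<bar>u\<bar> + d * \<bar>v\<bar>" by (simp add: algebra_simps)
  finally show ?thesis using f s u_def v_def by simp
qed

lemma S_eq: "S g x = (\<Sum>j1\<le>N1. \<Sum>j2\<le>N2. bern_w N1 N2 x j1 j2 * g (Am (real j1 / real N1, real j2 / real N2)))"
  by (simp add: step_op_def bernstein2_def)

lemma posop_S: "posop S"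
  unfolding posop_def S_eq
proof (intro conjI allI impI ballI)
  show "(\<lambda>z. \<Sum>j1\<le>N1. \<Sum>j2\<le>N2. bern_w N1 N2 z j1 j2 * (g (Am (real j1 / real N1, real j2 / real N2)) + h (Am (real j1 / real N1, real j2 / real N2)))) =
      (\<lambda>z. (\<Sum>j1\<le>N1. \<Sum>j2\<le>N2. bern_w N1 N2 z j1 j2 * g (Am (real j1 / real N1, real j2 / real N2))) +
           (\<Sum>j1\<le>N1. \<Sum>j2\<le>N2. bern_w N1 N2 z j1 j2 * h (Am (real j1 / real N1, real j2 / real N2))))" for g h
    by (simp add: distrib_left sum.distrib)
  show "(\<lambda>z. \<Sum>j1\<le>N1. \<Sum>j2\<le>N2. bern_w N1 N2 z j1 j2 * (c * g (Am (real j1 / real N1, real j2 / real N2)))) =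
      (\<lambda>z. c * (\<Sum>j1\<le>N1. \<Sum>j2\<le>N2. bern_w N1 N2 z j1 j2 * g (Am (real j1 / real N1, real j2 / real N2))))" for c g
    by (simp add: sum_distrib_left algebra_simps)
  show "(\<lambda>z. \<Sum>j1\<le>N1. \<Sum>j2\<le>N2. bern_w N1 N2 z j1 j2 * c) = (\<lambda>z. c)" for c
    using sum_bern_w by (simp add: sum_distrib_right[symmetric])
  show "(\<Sum>j1\<le>N1. \<Sum>j2\<le>N2. bern_w N1 N2 x j1 j2 * g (Am (real j1 / real N1, real j2 / real N2)))
     \<le> (\<Sum>j1\<le>N1. \<Sum>j2\<le>N2. bern_w N1 N2 x j1 j2 * h (Am (real j1 / real N1, real j2 / real N2)))"
    if "\<forall>z\<in>dom2. g z \<le> h z" "x \<in> dom2" for g h x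
    using that N1_pos N2_pos
    by (intro sum_mono mult_left_mono) (auto simp: bern_w_nonneg Am_dom grid_in)
qed

lemma posop_Sm: "posop (S ^^ m)"
  by (rule posop_funpow[OF posop_S])

lemma wlip_S: "wlip d K g \<Longrightarrow> wlip d K (S g)"
proof -
  assume g: "wlip d K g"
  have "wlip d K (g \<circ> Am)"
    unfolding wlip_def
  proof (intro conjI ballI)
    show "0 \<le> K" using g by (simp add: wlip_def)
    fix a b assume "a \<in> dom2" "b \<in> dom2"
    then have "\<bar>(g \<circ> Am) a - (g \<circ> Am) b\<bar> \<le> K * (\<bar>fst (Am a) - fst (Am b)\<bar> + d * \<bar>snd (Am a) - snd (Am b)\<bar>)"
      using g Am_dom by (simp add: wlip_def)
    also have "\<dots> \<le> K * (\<bar>fst a - fst b\<bar> + d * \<bar>snd a - snd b\<bar>)"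
      using Am_rho g by (intro mult_left_mono) (auto simp: wlip_def)
    finally show "\<bar>(g \<circ> Am) a - (g \<circ> Am) b\<bar> \<le> K * (\<bar>fst a - fst b\<bar> + d * \<bar>snd a - snd b\<bar>)" .
  qed
  then show ?thesis
    unfolding step_op_def using g
    by (subst wlip_def) (auto intro: bern2_wlip simp: N1_pos N2_pos d_pos less_imp_le wlip_def)
qed

lemma wlip_Sm: "wlip d K g \<Longrightarrow> wlip d K ((S ^^ m) g)"
  by (induction m) (auto intro: wlip_S)

end



lemma bern_var:
  assumes "0 < n"
  shows "(\<Sum>k\<le>n. Bernstein n k x * (real k / real n - a)\<^sup>2) = (x - a)\<^sup>2 + x * (1 - x) / real n"
proof -
  have pt: "Bernstein n k x * (real k / real n - a)\<^sup>2 =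
     (1 / (real n)\<^sup>2) * (real k * (real k - 1) * Bernstein n k x) +
     (1 / (real n)\<^sup>2 - 2 * a / real n) * (real k * Bernstein n k x) + a\<^sup>2 * Bernstein n k x" for k
    using assms by (simp add: power2_eq_square field_simps)
  have "(\<Sum>k\<le>n. Bernstein n k x * (real k / real n - a)\<^sup>2) =
     (1 / (real n)\<^sup>2) * (\<Sum>k\<le>n. real k * (real k - 1) * Bernstein n k x) +
     (1 / (real n)\<^sup>2 - 2 * a / real n) * (\<Sum>k\<le>n. real k * Bernstein n k x) + a\<^sup>2 * (\<Sum>k\<le>n. Bernstein n k x)"
    unfolding pt by (simp only: sum.distrib sum_distrib_left)
  also have "\<dots> = (x - a)\<^sup>2 + x * (1 - x) / real n"
    unfolding sum_kk_Bernstein sum_k_Bernstein sum_Bernstein using assms by (simp add: power2_eq_square field_simps)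
  finally show ?thesis .
qed

lemma bern_var_le:
  assumes "0 < n" "0 \<le> x" "x \<le> 1"
  shows "(\<Sum>k\<le>n. Bernstein n k x * (real k / real n - a)\<^sup>2) \<le> (x - a)\<^sup>2 + 1 / real n"
proof -
  have "x * (1 - x) \<le> 1" using assms by (smt (verit) mult_left_le)
  then have "x * (1 - x) / real n \<le> 1 / real n" using assms by (simp add: divide_right_mono)
  then show ?thesis using bern_var[OF assms(1)] by simp
qed

lemma sq_cvx: "0 \<le> e \<Longrightarrow> e \<le> 1 \<Longrightarrow> ((1 - e) * u + e * v)\<^sup>2 \<le> (1 - e) * u\<^sup>2 + e * (v::real)\<^sup>2"
proof -
  assume "0 \<le> e" "e \<le> 1"
  then have "0 \<le> e * (1 - e) * (u - v)\<^sup>2" by simp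
  moreover have "(1 - e) * u\<^sup>2 + e * v\<^sup>2 - ((1 - e) * u + e * v)\<^sup>2 = e * (1 - e) * (u - v)\<^sup>2"
    by (simp add: power2_eq_square algebra_simps)
  ultimately show ?thesis by linarith
qed

lemma sum_w_fst: "(\<Sum>j1\<le>N1. \<Sum>j2\<le>N2. bern_w N1 N2 x j1 j2 * \<phi> j1) = (\<Sum>j1\<le>N1. Bernstein N1 j1 (fst x) * \<phi> j1)"
  by (simp add: bern_w_eq sum_distrib_left[symmetric] sum_distrib_right[symmetric] algebra_simps)

lemma sum_w_snd: "(\<Sum>j1\<le>N1. \<Sum>j2\<le>N2. bern_w N1 N2 x j1 j2 * \<phi> j2) = (\<Sum>j2\<le>N2. Bernstein N2 j2 (snd x) * \<phi> j2)"
  by (subst sum.swap) (simp add: bern_w_eq sum_distrib_left[symmetric] sum_distrib_right[symmetric] algebra_simps)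


lemma pw_sq:
  assumes "0 \<le> e" "e \<le> 1" "0 \<le> g1" "g1 \<le> 1" "0 \<le> g2" "g2 \<le> 1" "0 \<le> a" "a \<le> (1::real)"
  shows "((1 - e) * g1 + e * g2 - a)\<^sup>2 \<le> (g1 - a)\<^sup>2 + e"
proof -
  have "(1 - e) * g1 + e * g2 - a = (1 - e) * (g1 - a) + e * (g2 - a)" by (simp add: algebra_simps)
  then have "((1 - e) * g1 + e * g2 - a)\<^sup>2 \<le> (1 - e) * (g1 - a)\<^sup>2 + e * (g2 - a)\<^sup>2"
    using sq_cvx[OF assms(1,2)] by simp
  moreover have "(g2 - a)\<^sup>2 \<le> 1"
  proof -
    have "\<bar>g2 - a\<bar> \<le> 1" using assms by auto
    then have "\<bar>g2 - a\<bar> * \<bar>g2 - a\<bar> \<le> 1 * 1" by (intro mult_mono) auto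
    then show ?thesis by (simp add: power2_eq_square abs_mult[symmetric])
  qed
  moreover have "(1 - e) * (g1 - a)\<^sup>2 \<le> (g1 - a)\<^sup>2" using assms by (simp add: mult_left_le_one_le)
  moreover have "e * (g2 - a)\<^sup>2 \<le> e" using assms calculation(2) by (simp add: mult_left_le)
  ultimately show ?thesis by linarith
qed

context setting
begin

abbreviation "cv \<equiv> 1 + 1 / d + \<kappa>"

lemma S_var1:
  assumes "0 \<le> a" "a \<le> 1" "x \<in> dom2"
  shows "S (\<lambda>z. (fst z - a)\<^sup>2) x \<le> (fst x - a)\<^sup>2 + cv / real N1"
proof -
  have "S (\<lambda>z. (fst z - a)\<^sup>2) x \<le>
     (\<Sum>j1\<le>N1. \<Sum>j2\<le>N2. bern_w N1 N2 x j1 j2 * ((real j1 / real N1 - a)\<^sup>2 + e1))"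
    unfolding S_eq
  proof (intro sum_mono mult_left_mono)
    fix j1 j2 assume j: "j1 \<in> {..N1}" "j2 \<in> {..N2}"
    have g: "(real j1 / real N1, real j2 / real N2) \<in> dom2" using j N1_pos N2_pos by (intro grid_in) auto
    show "(fst (Am (real j1 / real N1, real j2 / real N2)) - a)\<^sup>2 \<le> (real j1 / real N1 - a)\<^sup>2 + e1"
      unfolding Am_fst fst_conv snd_conv
      by (rule pw_sq[OF e1_ge e1_le]) (use g assms in \<open>auto simp: dom2_iff\<close>)
    show "0 \<le> bern_w N1 N2 x j1 j2" using assms by (simp add: bern_w_nonneg)
  qed
  also have "\<dots> = (\<Sum>j1\<le>N1. Bernstein N1 j1 (fst x) * (real j1 / real N1 - a)\<^sup>2) + e1"
  proof -
    have "(\<Sum>j1\<le>N1. Bernstein N1 j1 (fst x) * e1) = e1"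
      by (simp only: sum_distrib_right[symmetric] sum_Bernstein mult_1)
    then show ?thesis unfolding sum_w_fst by (simp only: distrib_left sum.distrib)
  qed
  also have "\<dots> \<le> (fst x - a)\<^sup>2 + 1 / real N1 + e1"
    using bern_var_le[OF N1_pos, of "fst x" a] assms by (simp add: dom2_iff)
  also have "\<dots> \<le> (fst x - a)\<^sup>2 + cv / real N1"
  proof -
    have "e1 \<le> \<kappa> / real N1" using d_le k_pos N1_pos by (simp add: divide_right_mono mult_left_le)
    moreover have "cv / real N1 = 1 / real N1 + (1 / d) / real N1 + \<kappa> / real N1" by (simp add: add_divide_distrib)
    moreover have "0 \<le> (1 / d) / real N1" using d_pos by simp
    ultimately show ?thesis by linarith
  qed
  finally show ?thesis .
qed

lemma S_var2:
  assumes "0 \<le> a" "a \<le> 1" "x \<in> dom2"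
  shows "S (\<lambda>z. (snd z - a)\<^sup>2) x \<le> (snd x - a)\<^sup>2 + cv / real N1"
proof -
  have "S (\<lambda>z. (snd z - a)\<^sup>2) x \<le>
     (\<Sum>j1\<le>N1. \<Sum>j2\<le>N2. bern_w N1 N2 x j1 j2 * ((real j2 / real N2 - a)\<^sup>2 + e2))"
    unfolding S_eq
  proof (intro sum_mono mult_left_mono)
    fix j1 j2 assume j: "j1 \<in> {..N1}" "j2 \<in> {..N2}"
    have g: "(real j1 / real N1, real j2 / real N2) \<in> dom2" using j N1_pos N2_pos by (intro grid_in) auto
    have e: "snd (Am (real j1 / real N1, real j2 / real N2)) = (1 - e2) * (real j2 / real N2) + e2 * (real j1 / real N1)"
      unfolding Am_snd by simp
    show "(snd (Am (real j1 / real N1, real j2 / real N2)) - a)\<^sup>2 \<le> (real j2 / real N2 - a)\<^sup>2 + e2"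
      unfolding e
      by (rule pw_sq[OF e2_ge kN]) (use g assms in \<open>auto simp: dom2_iff\<close>)
    show "0 \<le> bern_w N1 N2 x j1 j2" using assms by (simp add: bern_w_nonneg)
  qed
  also have "\<dots> = (\<Sum>j2\<le>N2. Bernstein N2 j2 (snd x) * (real j2 / real N2 - a)\<^sup>2) + e2"
  proof -
    have "(\<Sum>j2\<le>N2. Bernstein N2 j2 (snd x) * e2) = e2"
      by (simp only: sum_distrib_right[symmetric] sum_Bernstein mult_1)
    then show ?thesis unfolding sum_w_snd by (simp only: distrib_left sum.distrib)
  qed
  also have "\<dots> \<le> (snd x - a)\<^sup>2 + 1 / real N2 + e2"
    using bern_var_le[OF N2_pos, of "snd x" a] assms by (simp add: dom2_iff)
  also have "\<dots> \<le> (snd x - a)\<^sup>2 + cv / real N1"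
  proof -
    have "1 / real N2 = (1 / d) / real N1" using N2_eq by simp
    moreover have "cv / real N1 = 1 / real N1 + (1 / d) / real N1 + \<kappa> / real N1" by (simp add: add_divide_distrib)
    moreover have "0 \<le> 1 / real N1" by simp
    ultimately show ?thesis by linarith
  qed
  finally show ?thesis .
qed

lemma Sm_var1:
  assumes "0 \<le> a" "a \<le> 1"
  shows "x \<in> dom2 \<Longrightarrow> (S ^^ m) (\<lambda>z. (fst z - a)\<^sup>2) x \<le> (fst x - a)\<^sup>2 + real m * cv / real N1"
proof (induction m arbitrary: x)
  case 0 then show ?case by simp
next
  case (Suc m)
  have "(S ^^ Suc m) (\<lambda>z. (fst z - a)\<^sup>2) x = S ((S ^^ m) (\<lambda>z. (fst z - a)\<^sup>2)) x" by simp
  also have "\<dots> \<le> S (\<lambda>z. (fst z - a)\<^sup>2 + real m * cv / real N1) x"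
    by (rule posop_mono[OF posop_S _ Suc.prems]) (rule Suc.IH)
  also have "\<dots> = S (\<lambda>z. (fst z - a)\<^sup>2) x + real m * cv / real N1"
    by (simp add: posop_add[OF posop_S] posop_const[OF posop_S])
  also have "\<dots> \<le> (fst x - a)\<^sup>2 + real (Suc m) * cv / real N1"
    using S_var1[OF assms Suc.prems] by (simp add: algebra_simps add_divide_distrib)
  finally show ?case .
qed

lemma Sm_var2:
  assumes "0 \<le> a" "a \<le> 1"
  shows "x \<in> dom2 \<Longrightarrow> (S ^^ m) (\<lambda>z. (snd z - a)\<^sup>2) x \<le> (snd x - a)\<^sup>2 + real m * cv / real N1"
proof (induction m arbitrary: x)
  case 0 then show ?case by simp
next
  case (Suc m)
  have "(S ^^ Suc m) (\<lambda>z. (snd z - a)\<^sup>2) x = S ((S ^^ m) (\<lambda>z. (snd z - a)\<^sup>2)) x" by simp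
  also have "\<dots> \<le> S (\<lambda>z. (snd z - a)\<^sup>2 + real m * cv / real N1) x"
    by (rule posop_mono[OF posop_S _ Suc.prems]) (rule Suc.IH)
  also have "\<dots> = S (\<lambda>z. (snd z - a)\<^sup>2) x + real m * cv / real N1"
    by (simp add: posop_add[OF posop_S] posop_const[OF posop_S])
  also have "\<dots> \<le> (snd x - a)\<^sup>2 + real (Suc m) * cv / real N1"
    using S_var2[OF assms Suc.prems] by (simp add: algebra_simps add_divide_distrib)
  finally show ?case .
qed

end




lemma dom2_cvx: "x \<in> dom2 \<Longrightarrow> y \<in> dom2 \<Longrightarrow> 0 \<le> t \<Longrightarrow> t \<le> 1 \<Longrightarrow> (1 - t) *\<^sub>R x + t *\<^sub>R y \<in> dom2"
  unfolding dom2_iff using cvx01[of t "fst x" "fst y"] cvx01[of t "snd x" "snd y"] by simp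

lemma dist_sq: "(dist q z)\<^sup>2 = (fst q - fst z)\<^sup>2 + (snd q - snd (z::real \<times> real))\<^sup>2"
  by (cases q; cases z) (simp add: dist_Pair_Pair dist_real_def)

context setting
begin

lemma Sm_move:
  assumes g: "wlip d K g" and x: "x \<in> dom2"
  shows "\<bar>(S ^^ m) g x - g x\<bar> \<le> K * (1 + d) * sqrt (real m * cv / real N1)"
proof -
  let ?P = "S ^^ m"
  have P: "posop ?P" by (rule posop_Sm)
  have K: "0 \<le> K" using g by (simp add: wlip_def)
  have x1: "0 \<le> fst x" "fst x \<le> 1" and x2: "0 \<le> snd x" "snd x \<le> 1" using x by (auto simp: dom2_iff)
  have "?P (\<lambda>z. g z - g x) x = ?P g x - ?P (\<lambda>z. g x) x" by (rule posop_diff[OF P])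
  then have e: "?P g x - g x = ?P (\<lambda>z. g z - g x) x" by (simp add: posop_const[OF P])
  have "\<bar>?P (\<lambda>z. g z - g x) x\<bar> \<le> ?P (\<lambda>z. \<bar>g z - g x\<bar>) x" by (rule posop_abs[OF P x])
  also have "\<dots> \<le> ?P (\<lambda>z. K * (\<bar>fst z - fst x\<bar> + d * \<bar>snd z - snd x\<bar>)) x"
    by (rule posop_mono[OF P _ x]) (use g x in \<open>auto simp: wlip_def\<close>)
  also have "\<dots> = K * ?P (\<lambda>z. \<bar>fst z - fst x\<bar> + d * \<bar>snd z - snd x\<bar>) x"
    by (rule posop_scale[OF P])
  also have "?P (\<lambda>z. \<bar>fst z - fst x\<bar> + d * \<bar>snd z - snd x\<bar>) x =
      ?P (\<lambda>z. \<bar>fst z - fst x\<bar>) x + ?P (\<lambda>z. d * \<bar>snd z - snd x\<bar>) x"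
    by (rule posop_add[OF P])
  also have "?P (\<lambda>z. d * \<bar>snd z - snd x\<bar>) x = d * ?P (\<lambda>z. \<bar>snd z - snd x\<bar>) x"
    by (rule posop_scale[OF P])
  finally have 1: "\<bar>?P g x - g x\<bar> \<le> K * (?P (\<lambda>z. \<bar>fst z - fst x\<bar>) x + d * ?P (\<lambda>z. \<bar>snd z - snd x\<bar>) x)"
    using e by simp
  have "?P (\<lambda>z. \<bar>fst z - fst x\<bar>) x \<le> sqrt (?P (\<lambda>z. \<bar>fst z - fst x\<bar>\<^sup>2) x)"
    by (rule posop_sqrt[OF P x])
  also have "\<dots> \<le> sqrt (real m * cv / real N1)"
    using Sm_var1[OF x1 x, of m] by simp
  finally have a: "?P (\<lambda>z. \<bar>fst z - fst x\<bar>) x \<le> sqrt (real m * cv / real N1)" .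
  have "?P (\<lambda>z. \<bar>snd z - snd x\<bar>) x \<le> sqrt (?P (\<lambda>z. \<bar>snd z - snd x\<bar>\<^sup>2) x)"
    by (rule posop_sqrt[OF P x])
  also have "\<dots> \<le> sqrt (real m * cv / real N1)"
    using Sm_var2[OF x2 x, of m] by simp
  finally have b: "?P (\<lambda>z. \<bar>snd z - snd x\<bar>) x \<le> sqrt (real m * cv / real N1)" .
  have "K * (?P (\<lambda>z. \<bar>fst z - fst x\<bar>) x + d * ?P (\<lambda>z. \<bar>snd z - snd x\<bar>) x)
     \<le> K * (sqrt (real m * cv / real N1) + d * sqrt (real m * cv / real N1))"
    using a b K d_pos by (intro mult_left_mono add_mono) auto
  also have "\<dots> = K * (1 + d) * sqrt (real m * cv / real N1)" by (simp add: algebra_simps)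
  finally show ?thesis using 1 by linarith
qed

abbreviation "I \<equiv> interp_op d \<kappa> N1 N2"

lemma I_eq: "I \<theta> g x = (\<Sum>j1\<le>N1. \<Sum>j2\<le>N2. bern_w N1 N2 x j1 j2 *
        g ((1 - \<theta>) *\<^sub>R x + \<theta> *\<^sub>R Am (real j1 / real N1, real j2 / real N2)))"
  by (simp add: interp_op_def)

lemma I_0: "I 0 g x = g x"
  unfolding I_eq by (simp add: sum_distrib_right[symmetric] sum_bern_w)

lemma I_1: "I 1 g = S g"
  by (rule ext) (simp add: I_eq S_eq)

lemma S_dist:
  assumes z: "z \<in> dom2"
  shows "S (\<lambda>q. dist q z) z \<le> sqrt (2 * cv / real N1)"
proof -
  have z1: "0 \<le> fst z" "fst z \<le> 1" and z2: "0 \<le> snd z" "snd z \<le> 1" using z by (auto simp: dom2_iff)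
  have "S (\<lambda>q. dist q z) z \<le> sqrt (S (\<lambda>q. (dist q z)\<^sup>2) z)" by (rule posop_sqrt[OF posop_S z])
  also have "S (\<lambda>q. (dist q z)\<^sup>2) z = S (\<lambda>q. (fst q - fst z)\<^sup>2) z + S (\<lambda>q. (snd q - snd z)\<^sup>2) z"
    unfolding dist_sq by (rule posop_add[OF posop_S])
  also have "\<dots> \<le> 2 * cv / real N1"
  proof -
    have "2 * cv / real N1 = cv / real N1 + cv / real N1" by simp
    moreover have "S (\<lambda>q. (fst q - fst z)\<^sup>2) z \<le> cv / real N1" using S_var1[OF z1 z] by simp
    moreover have "S (\<lambda>q. (snd q - snd z)\<^sup>2) z \<le> cv / real N1" using S_var2[OF z2 z] by simp
    ultimately show ?thesis by linarith
  qed
  finally show ?thesis by simp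
qed

end



lemma lin_fst1: "0 \<le> t \<Longrightarrow> t \<le> 1 \<Longrightarrow>
   \<bar>fst ((1 - t) *\<^sub>R x + t *\<^sub>R q) - fst ((1 - t) *\<^sub>R y + t *\<^sub>R (q::real\<times>real))\<bar> = (1 - t) * \<bar>fst x - fst y\<bar>"
proof -
  assume "0 \<le> t" "t \<le> 1"
  have "fst ((1 - t) *\<^sub>R x + t *\<^sub>R q) - fst ((1 - t) *\<^sub>R y + t *\<^sub>R q) = (1 - t) * (fst x - fst y)"
    by (simp add: algebra_simps)
  then show ?thesis using \<open>t \<le> 1\<close> by (simp add: abs_mult)
qed

lemma lin_snd1: "0 \<le> t \<Longrightarrow> t \<le> 1 \<Longrightarrow>
   \<bar>snd ((1 - t) *\<^sub>R x + t *\<^sub>R q) - snd ((1 - t) *\<^sub>R y + t *\<^sub>R (q::real\<times>real))\<bar> = (1 - t) * \<bar>snd x - snd y\<bar>"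
proof -
  assume "0 \<le> t" "t \<le> 1"
  have "snd ((1 - t) *\<^sub>R x + t *\<^sub>R q) - snd ((1 - t) *\<^sub>R y + t *\<^sub>R q) = (1 - t) * (snd x - snd y)"
    by (simp add: algebra_simps)
  then show ?thesis using \<open>t \<le> 1\<close> by (simp add: abs_mult)
qed

lemma lin_fst2: "0 \<le> t \<Longrightarrow>
   \<bar>fst ((1 - t) *\<^sub>R y + t *\<^sub>R a) - fst ((1 - t) *\<^sub>R y + t *\<^sub>R (b::real\<times>real))\<bar> = t * \<bar>fst a - fst b\<bar>"
proof -
  assume "0 \<le> t"
  have "fst ((1 - t) *\<^sub>R y + t *\<^sub>R a) - fst ((1 - t) *\<^sub>R y + t *\<^sub>R b) = t * (fst a - fst b)"
    by (simp add: algebra_simps)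
  then show ?thesis using \<open>0 \<le> t\<close> by (simp add: abs_mult)
qed

lemma lin_snd2: "0 \<le> t \<Longrightarrow>
   \<bar>snd ((1 - t) *\<^sub>R y + t *\<^sub>R a) - snd ((1 - t) *\<^sub>R y + t *\<^sub>R (b::real\<times>real))\<bar> = t * \<bar>snd a - snd b\<bar>"
proof -
  assume "0 \<le> t"
  have "snd ((1 - t) *\<^sub>R y + t *\<^sub>R a) - snd ((1 - t) *\<^sub>R y + t *\<^sub>R b) = t * (snd a - snd b)"
    by (simp add: algebra_simps)
  then show ?thesis using \<open>0 \<le> t\<close> by (simp add: abs_mult)
qed

lemma dist_interp: "dist ((1 - t) *\<^sub>R z + t *\<^sub>R q) ((1 - t') *\<^sub>R z + t' *\<^sub>R q) = \<bar>t - t'\<bar> * dist q (z::real\<times>real)"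
proof -
  have "(1 - t) *\<^sub>R z + t *\<^sub>R q - ((1 - t') *\<^sub>R z + t' *\<^sub>R q) = (t - t') *\<^sub>R (q - z)"
    by (simp add: algebra_simps)
  then show ?thesis by (simp add: dist_norm)
qed

lemma double_bound:
  assumes "x \<in> dom2" "\<And>j1 j2. j1 \<le> N1 \<Longrightarrow> j2 \<le> N2 \<Longrightarrow> \<bar>a j1 j2\<bar> \<le> M"
  shows "\<bar>\<Sum>j1\<le>N1. \<Sum>j2\<le>N2. bern_w N1 N2 x j1 j2 * a j1 j2\<bar> \<le> M"
proof -
  have "\<bar>\<Sum>j1\<le>N1. \<Sum>j2\<le>N2. bern_w N1 N2 x j1 j2 * a j1 j2\<bar> \<le> (\<Sum>j1\<le>N1. \<bar>\<Sum>j2\<le>N2. bern_w N1 N2 x j1 j2 * a j1 j2\<bar>)"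
    by (rule sum_abs)
  also have "\<dots> \<le> (\<Sum>j1\<le>N1. \<Sum>j2\<le>N2. bern_w N1 N2 x j1 j2 * M)"
  proof (rule sum_mono)
    fix j1 assume j1: "j1 \<in> {..N1}"
    have "\<bar>\<Sum>j2\<le>N2. bern_w N1 N2 x j1 j2 * a j1 j2\<bar> \<le> (\<Sum>j2\<le>N2. \<bar>bern_w N1 N2 x j1 j2 * a j1 j2\<bar>)"
      by (rule sum_abs)
    also have "\<dots> \<le> (\<Sum>j2\<le>N2. bern_w N1 N2 x j1 j2 * M)"
      using assms j1 by (intro sum_mono) (simp add: abs_mult bern_w_nonneg mult_left_mono)
    finally show "\<bar>\<Sum>j2\<le>N2. bern_w N1 N2 x j1 j2 * a j1 j2\<bar> \<le> (\<Sum>j2\<le>N2. bern_w N1 N2 x j1 j2 * M)" .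
  qed
  also have "\<dots> = M" by (simp add: sum_distrib_right[symmetric] sum_bern_w)
  finally show ?thesis .
qed

context setting
begin

lemma I_diff:
  assumes f: "L-lipschitz_on dom2 f" and z: "z \<in> dom2"
    and t: "0 \<le> t" "t \<le> 1" and t': "0 \<le> t'" "t' \<le> 1"
  shows "\<bar>I t f z - I t' f z\<bar> \<le> L * \<bar>t - t'\<bar> * sqrt (2 * cv / real N1)"
proof -
  have L: "0 \<le> L" using f by (rule lipschitz_on_nonneg)
  define q where "q j1 j2 = Am (real j1 / real N1, real j2 / real N2)" for j1 j2
  have q: "q j1 j2 \<in> dom2" if "j1 \<le> N1" "j2 \<le> N2" for j1 j2
    unfolding q_def using that N1_pos N2_pos by (intro Am_dom grid_in) auto
  have "I t f z - I t' f z = (\<Sum>j1\<le>N1. \<Sum>j2\<le>N2. bern_w N1 N2 z j1 j2 *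
      (f ((1 - t) *\<^sub>R z + t *\<^sub>R q j1 j2) - f ((1 - t') *\<^sub>R z + t' *\<^sub>R q j1 j2)))"
    unfolding I_eq q_def by (simp add: sum_subtractf[symmetric] right_diff_distrib)
  also have "\<bar>\<dots>\<bar> \<le> (\<Sum>j1\<le>N1. \<Sum>j2\<le>N2. bern_w N1 N2 z j1 j2 * (L * \<bar>t - t'\<bar> * dist (q j1 j2) z))"
  proof -
    have "\<bar>\<Sum>j1\<le>N1. \<Sum>j2\<le>N2. bern_w N1 N2 z j1 j2 *
      (f ((1 - t) *\<^sub>R z + t *\<^sub>R q j1 j2) - f ((1 - t') *\<^sub>R z + t' *\<^sub>R q j1 j2))\<bar>
      \<le> (\<Sum>j1\<le>N1. \<bar>\<Sum>j2\<le>N2. bern_w N1 N2 z j1 j2 *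
      (f ((1 - t) *\<^sub>R z + t *\<^sub>R q j1 j2) - f ((1 - t') *\<^sub>R z + t' *\<^sub>R q j1 j2))\<bar>)" by (rule sum_abs)
    also have "\<dots> \<le> (\<Sum>j1\<le>N1. \<Sum>j2\<le>N2. \<bar>bern_w N1 N2 z j1 j2 *
      (f ((1 - t) *\<^sub>R z + t *\<^sub>R q j1 j2) - f ((1 - t') *\<^sub>R z + t' *\<^sub>R q j1 j2))\<bar>)"
      by (intro sum_mono sum_abs)
    also have "\<dots> \<le> (\<Sum>j1\<le>N1. \<Sum>j2\<le>N2. bern_w N1 N2 z j1 j2 * (L * \<bar>t - t'\<bar> * dist (q j1 j2) z))"
    proof (intro sum_mono)
      fix j1 j2 assume j: "j1 \<in> {..N1}" "j2 \<in> {..N2}"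
      have p1: "(1 - t) *\<^sub>R z + t *\<^sub>R q j1 j2 \<in> dom2" using j q z t by (intro dom2_cvx) auto
      have p2: "(1 - t') *\<^sub>R z + t' *\<^sub>R q j1 j2 \<in> dom2" using j q z t' by (intro dom2_cvx) auto
      have "\<bar>f ((1 - t) *\<^sub>R z + t *\<^sub>R q j1 j2) - f ((1 - t') *\<^sub>R z + t' *\<^sub>R q j1 j2)\<bar>
          \<le> L * dist ((1 - t) *\<^sub>R z + t *\<^sub>R q j1 j2) ((1 - t') *\<^sub>R z + t' *\<^sub>R q j1 j2)"
        using lipschitz_onD[OF f p1 p2] by (simp add: dist_real_def)
      also have "\<dots> = L * \<bar>t - t'\<bar> * dist (q j1 j2) z" by (simp add: dist_interp)
      finally show "\<bar>bern_w N1 N2 z j1 j2 *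
      (f ((1 - t) *\<^sub>R z + t *\<^sub>R q j1 j2) - f ((1 - t') *\<^sub>R z + t' *\<^sub>R q j1 j2))\<bar>
        \<le> bern_w N1 N2 z j1 j2 * (L * \<bar>t - t'\<bar> * dist (q j1 j2) z)"
        using z by (simp add: abs_mult bern_w_nonneg mult_left_mono)
    qed
    finally show ?thesis .
  qed
  also have "\<dots> = L * \<bar>t - t'\<bar> * S (\<lambda>q. dist q z) z"
    unfolding S_eq q_def by (simp add: sum_distrib_left algebra_simps)
  also have "\<dots> \<le> L * \<bar>t - t'\<bar> * sqrt (2 * cv / real N1)"
    using S_dist[OF z] L by (intro mult_left_mono) auto
  finally show ?thesis .
qed

lemma wlip_I:
  assumes g: "wlip d K g" and t: "0 \<le> t" "t \<le> 1"
  shows "wlip d K (I t g)"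
  unfolding wlip_def
proof (intro conjI ballI)
  show K: "0 \<le> K" using g by (simp add: wlip_def)
  fix x y assume x: "x \<in> dom2" and y: "y \<in> dom2"
  have gl: "\<bar>g a - g b\<bar> \<le> K * (\<bar>fst a - fst b\<bar> + d * \<bar>snd a - snd b\<bar>)"
    if "a \<in> dom2" "b \<in> dom2" for a b using g that by (simp add: wlip_def)
  define q where "q j1 j2 = Am (real j1 / real N1, real j2 / real N2)" for j1 j2
  have q: "q j1 j2 \<in> dom2" if "j1 \<le> N1" "j2 \<le> N2" for j1 j2
    unfolding q_def using that N1_pos N2_pos by (intro Am_dom grid_in) auto
  define h where "h v = g ((1 - t) *\<^sub>R y + t *\<^sub>R Am v)" for v
  have e1: "I t g y = bernstein2 N1 N2 h y" unfolding I_eq bernstein2_def h_def ..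
  have e2: "I t g x - bernstein2 N1 N2 h x = (\<Sum>j1\<le>N1. \<Sum>j2\<le>N2. bern_w N1 N2 x j1 j2 *
      (g ((1 - t) *\<^sub>R x + t *\<^sub>R q j1 j2) - g ((1 - t) *\<^sub>R y + t *\<^sub>R q j1 j2)))"
    unfolding I_eq bernstein2_def h_def q_def by (simp add: sum_subtractf[symmetric] right_diff_distrib)
  have A: "\<bar>I t g x - bernstein2 N1 N2 h x\<bar> \<le> (1 - t) * (K * (\<bar>fst x - fst y\<bar> + d * \<bar>snd x - snd y\<bar>))"
    unfolding e2
  proof (rule double_bound[OF x])
    fix j1 j2 assume j: "j1 \<le> N1" "j2 \<le> N2"
    have "\<bar>g ((1 - t) *\<^sub>R x + t *\<^sub>R q j1 j2) - g ((1 - t) *\<^sub>R y + t *\<^sub>R q j1 j2)\<bar>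
       \<le> K * ((1 - t) * \<bar>fst x - fst y\<bar> + d * ((1 - t) * \<bar>snd x - snd y\<bar>))"
      using gl[OF dom2_cvx[OF x q[OF j] t] dom2_cvx[OF y q[OF j] t]]
      by (simp only: lin_fst1[OF t] lin_snd1[OF t])
    also have "\<dots> = (1 - t) * (K * (\<bar>fst x - fst y\<bar> + d * \<bar>snd x - snd y\<bar>))" by (simp add: algebra_simps)
    finally show "\<bar>g ((1 - t) *\<^sub>R x + t *\<^sub>R q j1 j2) - g ((1 - t) *\<^sub>R y + t *\<^sub>R q j1 j2)\<bar>
       \<le> (1 - t) * (K * (\<bar>fst x - fst y\<bar> + d * \<bar>snd x - snd y\<bar>))" .
  qed
  have hw: "wlip d (t * K) h"
    unfolding wlip_def
  proof (intro conjI ballI)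
    show "0 \<le> t * K" using t K by simp
    fix a b assume a: "a \<in> dom2" and b: "b \<in> dom2"
    have "\<bar>h a - h b\<bar> \<le> K * (t * \<bar>fst (Am a) - fst (Am b)\<bar> + d * (t * \<bar>snd (Am a) - snd (Am b)\<bar>))"
      unfolding h_def using gl[OF dom2_cvx[OF y Am_dom[OF a] t] dom2_cvx[OF y Am_dom[OF b] t]]
      by (simp only: lin_fst2[OF t(1)] lin_snd2[OF t(1)])
    also have "\<dots> = t * K * (\<bar>fst (Am a) - fst (Am b)\<bar> + d * \<bar>snd (Am a) - snd (Am b)\<bar>)"
      by (simp add: algebra_simps)
    also have "\<dots> \<le> t * K * (\<bar>fst a - fst b\<bar> + d * \<bar>snd a - snd b\<bar>)"
      using t K Am_rho by (intro mult_left_mono) auto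
    finally show "\<bar>h a - h b\<bar> \<le> t * K * (\<bar>fst a - fst b\<bar> + d * \<bar>snd a - snd b\<bar>)" .
  qed
  have B: "\<bar>bernstein2 N1 N2 h x - bernstein2 N1 N2 h y\<bar> \<le> t * K * (\<bar>fst x - fst y\<bar> + d * \<bar>snd x - snd y\<bar>)"
    by (rule bern2_wlip[OF hw N1_pos N2_pos _ x y]) (use d_pos in simp)
  have "\<bar>I t g x - I t g y\<bar> \<le> \<bar>I t g x - bernstein2 N1 N2 h x\<bar> + \<bar>bernstein2 N1 N2 h x - bernstein2 N1 N2 h y\<bar>"
    unfolding e1 by linarith
  also have "\<dots> \<le> (1 - t) * (K * (\<bar>fst x - fst y\<bar> + d * \<bar>snd x - snd y\<bar>)) + t * K * (\<bar>fst x - fst y\<bar> + d * \<bar>snd x - snd y\<bar>)"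
    using A B by linarith
  also have "\<dots> = K * (\<bar>fst x - fst y\<bar> + d * \<bar>snd x - snd y\<bar>)" by (simp add: algebra_simps)
  finally show "\<bar>I t g x - I t g y\<bar> \<le> K * (\<bar>fst x - fst y\<bar> + d * \<bar>snd x - snd y\<bar>)" .
qed

lemma lip_wlip:
  assumes f: "L-lipschitz_on dom2 f"
  shows "wlip d (L / d) f"
  unfolding wlip_def
proof (intro conjI ballI)
  have L: "0 \<le> L" using f by (rule lipschitz_on_nonneg)
  then show "0 \<le> L / d" using d_pos by simp
  fix a b assume a: "a \<in> dom2" and b: "b \<in> dom2"
  have "dist a b \<le> \<bar>fst a - fst b\<bar> + \<bar>snd a - snd b\<bar>"
    by (cases a; cases b) (simp add: dist_Pair_Pair dist_real_def real_sqrt_sum_squares_triangle_ineq sqrt_sum_squares_le_sum_abs)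
  also have "\<dots> \<le> (\<bar>fst a - fst b\<bar> + d * \<bar>snd a - snd b\<bar>) / d"
  proof -
    have "\<bar>fst a - fst b\<bar> \<le> \<bar>fst a - fst b\<bar> / d" using d_pos d_le by (simp add: le_divide_eq mult_left_le)
    then show ?thesis using d_pos by (simp add: add_divide_distrib)
  qed
  finally have dd: "dist a b \<le> (\<bar>fst a - fst b\<bar> + d * \<bar>snd a - snd b\<bar>) / d" .
  have "L * dist a b \<le> L * ((\<bar>fst a - fst b\<bar> + d * \<bar>snd a - snd b\<bar>) / d)"
    using mult_left_mono[OF dd L] .
  moreover have "\<bar>f a - f b\<bar> \<le> L * dist a b" using lipschitz_onD[OF f a b] by (simp add: dist_real_def)
  ultimately show "\<bar>f a - f b\<bar> \<le> L / d * (\<bar>fst a - fst b\<bar> + d * \<bar>snd a - snd b\<bar>)" by simp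
qed

end



lemma key_sqrt:
  assumes "0 \<le> \<delta>" "\<delta> \<le> 1" "\<delta> \<le> h * N" "0 \<le> c" "0 < (N::real)"
  shows "\<delta> * sqrt (c / N) \<le> sqrt c * sqrt h"
proof -
  have "\<delta> * \<delta> \<le> 1 * \<delta>" using assms by (intro mult_right_mono) auto
  then have "\<delta>\<^sup>2 \<le> h * N" using assms by (simp add: power2_eq_square)
  then have "\<delta>\<^sup>2 * (c / N) \<le> (h * N) * (c / N)" using assms by (intro mult_right_mono) auto
  also have "\<dots> = c * h" using assms by simp
  finally have X: "sqrt (\<delta>\<^sup>2 * (c / N)) \<le> sqrt (c * h)" by (rule real_sqrt_le_mono)
  have "sqrt (\<delta>\<^sup>2 * (c / N)) = \<bar>\<delta>\<bar> * sqrt (c / N)" by (simp only: real_sqrt_mult real_sqrt_abs)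
  moreover have "sqrt (c * h) = sqrt c * sqrt h" by (rule real_sqrt_mult)
  ultimately show ?thesis using X assms by simp
qed

lemma floor_facts:
  assumes "0 \<le> r"
  shows "real (nat \<lfloor>r\<rfloor>) \<le> r" "r < real (nat \<lfloor>r\<rfloor>) + 1"
  using assms of_int_floor_le[of r] real_of_int_floor_add_one_gt[of r] by (simp_all add: of_nat_nat)

context setting
begin

lemma uN_eq: "uN d \<kappa> N1 N2 f t x = (S ^^ nat \<lfloor>t * real N1\<rfloor>) (I (t * real N1 - real (nat \<lfloor>t * real N1\<rfloor>)) f) x"
  by (simp add: uN_def Let_def)

lemma same_step:
  assumes f: "L-lipschitz_on dom2 f" and x: "x \<in> dom2"
    and t: "0 \<le> t" "t \<le> 1" and t': "0 \<le> t'" "t' \<le> 1" and h: "\<bar>t - t'\<bar> \<le> h * real N1"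
  shows "\<bar>(S ^^ n) (I t f) x - (S ^^ n) (I t' f) x\<bar> \<le> L * sqrt (2 * cv) * sqrt h"
proof -
  have P: "posop (S ^^ n)" by (rule posop_Sm)
  have L: "0 \<le> L" using f by (rule lipschitz_on_nonneg)
  have cv: "0 \<le> 2 * cv" using d_pos k_pos by simp
  have eq: "(S ^^ n) (I t f) x - (S ^^ n) (I t' f) x = (S ^^ n) (\<lambda>z. I t f z - I t' f z) x"
    by (rule posop_diff[OF P, symmetric])
  have "\<bar>(S ^^ n) (\<lambda>z. I t f z - I t' f z) x\<bar> \<le> (S ^^ n) (\<lambda>z. \<bar>I t f z - I t' f z\<bar>) x" by (rule posop_abs[OF P x])
  also have "\<dots> \<le> (S ^^ n) (\<lambda>z. L * \<bar>t - t'\<bar> * sqrt (2 * cv / real N1)) x"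
    by (rule posop_mono[OF P _ x]) (rule I_diff[OF f _ t t'])
  also have "\<dots> = L * (\<bar>t - t'\<bar> * sqrt (2 * cv / real N1))" by (simp add: posop_const[OF P])
  also have "\<dots> \<le> L * (sqrt (2 * cv) * sqrt h)"
  proof -
    have d1: "\<bar>t - t'\<bar> \<le> 1" using t t' by (simp only: abs_le_iff) linarith
    have N: "0 < real N1" using N1_pos by simp
    have ks: "\<bar>t - t'\<bar> * sqrt (2 * cv / real N1) \<le> sqrt (2 * cv) * sqrt h"
      by (rule key_sqrt[OF abs_ge_zero d1 h cv N])
    show ?thesis by (rule mult_left_mono[OF ks L])
  qed
  finally show ?thesis unfolding eq by (simp only: mult.assoc)
qed

lemma time_le:
  assumes f: "L-lipschitz_on dom2 f" and x: "x \<in> dom2" and s: "0 \<le> s" and st: "s \<le> t"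
  shows "\<bar>uN d \<kappa> N1 N2 f t x - uN d \<kappa> N1 N2 f s x\<bar>
     \<le> (2 * (L * sqrt (2 * cv)) + L / d * (1 + d) * sqrt cv) * sqrt (t - s)"
proof -
  define N where "N = real N1"
  have N: "0 < N" using N1_pos by (simp add: N_def)
  define ns where "ns = nat \<lfloor>s * N\<rfloor>"
  define nt where "nt = nat \<lfloor>t * N\<rfloor>"
  define \<theta>s where "\<theta>s = s * N - real ns"
  define \<theta>t where "\<theta>t = t * N - real nt"
  have sN: "0 \<le> s * N" using s N by simp
  have tN: "0 \<le> t * N" using s st N by simp
  have fs: "real ns \<le> s * N" "s * N < real ns + 1" unfolding ns_def by (rule floor_facts[OF sN])+
  have ft: "real nt \<le> t * N" "t * N < real nt + 1" unfolding nt_def by (rule floor_facts[OF tN])+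
  have stN: "s * N \<le> t * N" using st N by simp
  have nsnt: "ns \<le> nt" unfolding ns_def nt_def using stN by (intro nat_mono floor_mono)
  have \<theta>s: "0 \<le> \<theta>s" "\<theta>s \<le> 1" using fs unfolding \<theta>s_def by linarith+
  have \<theta>t: "0 \<le> \<theta>t" "\<theta>t \<le> 1" using ft unfolding \<theta>t_def by linarith+
  have L: "0 \<le> L" using f by (rule lipschitz_on_nonneg)
  have ts: "0 \<le> t - s" using st by simp
  have ut: "uN d \<kappa> N1 N2 f t x = (S ^^ nt) (I \<theta>t f) x" unfolding uN_eq nt_def \<theta>t_def N_def ..
  have us: "uN d \<kappa> N1 N2 f s x = (S ^^ ns) (I \<theta>s f) x" unfolding uN_eq ns_def \<theta>s_def N_def ..
  define A where "A = L * sqrt (2 * cv)"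
  define B where "B = L / d * (1 + d) * sqrt cv"
  have A: "0 \<le> A" using L d_pos k_pos by (simp add: A_def)
  have B: "0 \<le> B" using L d_pos k_pos by (simp add: B_def)
  have sq: "0 \<le> sqrt (t - s)" using ts by simp
  show ?thesis
  proof (cases "ns = nt")
    case True
    have "\<theta>t - \<theta>s = (t - s) * N" using True by (simp add: \<theta>t_def \<theta>s_def left_diff_distrib)
    then have "\<bar>\<theta>t - \<theta>s\<bar> \<le> (t - s) * N" using stN by (simp add: left_diff_distrib)
    then have "\<bar>(S ^^ nt) (I \<theta>t f) x - (S ^^ nt) (I \<theta>s f) x\<bar> \<le> A * sqrt (t - s)"
      unfolding A_def N_def by (rule same_step[OF f x \<theta>t \<theta>s])
    moreover have "A * sqrt (t - s) \<le> (2 * A + B) * sqrt (t - s)" using A B sq by (intro mult_right_mono) auto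
    ultimately show ?thesis unfolding ut us True A_def B_def by linarith
  next
    case False
    then have lt: "real ns + 1 \<le> real nt" using nsnt by simp
    define m where "m = nt - Suc ns"
    have ntm: "nt = m + Suc ns" using False nsnt by (simp add: m_def)
    have ha: "\<bar>\<theta>t - 0\<bar> \<le> (t - s) * real N1" using ft fs lt \<theta>t unfolding \<theta>t_def N_def left_diff_distrib by simp
    have a: "\<bar>(S ^^ nt) (I \<theta>t f) x - (S ^^ nt) (I 0 f) x\<bar> \<le> A * sqrt (t - s)"
      unfolding A_def by (rule same_step[OF f x \<theta>t _ _ ha]) simp_all
    have I0: "I 0 f = f" by (rule ext) (rule I_0)
    have hb: "\<bar>1 - \<theta>s\<bar> \<le> (t - s) * real N1" using ft fs lt \<theta>s unfolding \<theta>s_def N_def left_diff_distrib by simp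
    have b: "\<bar>(S ^^ ns) (I 1 f) x - (S ^^ ns) (I \<theta>s f) x\<bar> \<le> A * sqrt (t - s)"
      unfolding A_def by (rule same_step[OF f x _ _ \<theta>s hb]) simp_all
    have I1: "(S ^^ ns) (I 1 f) = (S ^^ Suc ns) f" by (simp only: I_1 funpow_Suc_right o_apply)
    have g: "wlip d (L / d) ((S ^^ Suc ns) f)" by (rule wlip_Sm[OF lip_wlip[OF f]])
    have e: "(S ^^ nt) f = (S ^^ m) ((S ^^ Suc ns) f)" unfolding ntm funpow_add by (simp only: o_apply)
    have c0: "\<bar>(S ^^ m) ((S ^^ Suc ns) f) x - (S ^^ Suc ns) f x\<bar> \<le> L / d * (1 + d) * sqrt (real m * cv / real N1)"
      by (rule Sm_move[OF g x])
    have "real nt = real m + real ns + 1" using ntm by simp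
    then have "real m \<le> (t - s) * N" using ft fs unfolding left_diff_distrib by linarith
    moreover have cvp: "0 \<le> cv" using d_pos k_pos by simp
    ultimately have "real m * cv \<le> ((t - s) * N) * cv" by (rule mult_right_mono)
    then have "real m * cv / N \<le> ((t - s) * N) * cv / N" using N by (intro divide_right_mono) auto
    also have "((t - s) * N) * cv / N = cv * (t - s)" using N by simp
    finally have "real m * cv / N \<le> cv * (t - s)" .
    then have "sqrt (real m * cv / real N1) \<le> sqrt (cv * (t - s))"
      unfolding N_def by (rule real_sqrt_le_mono)
    also have "sqrt (cv * (t - s)) = sqrt cv * sqrt (t - s)" by (rule real_sqrt_mult)
    finally have sqm: "sqrt (real m * cv / real N1) \<le> sqrt cv * sqrt (t - s)" .
    have Kd: "0 \<le> L / d * (1 + d)" using L d_pos by simp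
    have "L / d * (1 + d) * sqrt (real m * cv / real N1) \<le> L / d * (1 + d) * (sqrt cv * sqrt (t - s))"
      using Kd sqm by (rule mult_left_mono[rotated])
    moreover have "L / d * (1 + d) * (sqrt cv * sqrt (t - s)) = B * sqrt (t - s)"
      unfolding B_def by (simp only: mult.assoc)
    ultimately have c: "\<bar>(S ^^ nt) f x - (S ^^ Suc ns) f x\<bar> \<le> B * sqrt (t - s)"
      using c0 unfolding e by linarith
    have a': "\<bar>(S ^^ nt) (I \<theta>t f) x - (S ^^ nt) f x\<bar> \<le> A * sqrt (t - s)" using a unfolding I0 .
    have b': "\<bar>(S ^^ Suc ns) f x - (S ^^ ns) (I \<theta>s f) x\<bar> \<le> A * sqrt (t - s)" using b unfolding I1 .
    have tri: "\<bar>p - q\<bar> \<le> \<bar>p - u\<bar> + \<bar>u - v\<bar> + \<bar>v - q\<bar>" for p q u v :: real by linarith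
    have "\<bar>uN d \<kappa> N1 N2 f t x - uN d \<kappa> N1 N2 f s x\<bar> \<le> A * sqrt (t - s) + B * sqrt (t - s) + A * sqrt (t - s)"
      unfolding ut us using tri[of "(S ^^ nt) (I \<theta>t f) x" "(S ^^ ns) (I \<theta>s f) x" "(S ^^ nt) f x" "(S ^^ Suc ns) f x"] a' b' c
      by linarith
    also have "\<dots> = (2 * A + B) * sqrt (t - s)" by (simp add: algebra_simps)
    finally have fin: "\<bar>uN d \<kappa> N1 N2 f t x - uN d \<kappa> N1 N2 f s x\<bar> \<le> (2 * A + B) * sqrt (t - s)" .
    show ?thesis using fin unfolding A_def B_def .
  qed
qed

lemma space:
  assumes f: "L-lipschitz_on dom2 f" and x: "x \<in> dom2" and y: "y \<in> dom2" and t: "0 \<le> t"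
  shows "\<bar>uN d \<kappa> N1 N2 f t x - uN d \<kappa> N1 N2 f t y\<bar> \<le> L / d * (1 + d) * dist x y"
proof -
  define n where "n = nat \<lfloor>t * real N1\<rfloor>"
  define \<theta> where "\<theta> = t * real N1 - real n"
  have tN: "0 \<le> t * real N1" using t by simp
  have fn: "real n \<le> t * real N1" "t * real N1 < real n + 1" unfolding n_def by (rule floor_facts[OF tN])+
  have \<theta>: "0 \<le> \<theta>" "\<theta> \<le> 1" using fn unfolding \<theta>_def by linarith+
  have w: "wlip d (L / d) ((S ^^ n) (I \<theta> f))" by (rule wlip_Sm[OF wlip_I[OF lip_wlip[OF f] \<theta>]])
  have L: "0 \<le> L / d" using w by (simp add: wlip_def)
  have "\<bar>uN d \<kappa> N1 N2 f t x - uN d \<kappa> N1 N2 f t y\<bar> \<le> L / d * (\<bar>fst x - fst y\<bar> + d * \<bar>snd x - snd y\<bar>)"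
    using w x y unfolding uN_eq n_def[symmetric] \<theta>_def[symmetric] wlip_def by blast
  also have "\<dots> \<le> L / d * (dist x y + d * dist x y)"
  proof -
    have "\<bar>fst x - fst y\<bar> \<le> dist x y" "\<bar>snd x - snd y\<bar> \<le> dist x y"
      by (metis dist_fst_le dist_real_def, metis dist_snd_le dist_real_def)
    then show ?thesis using L d_pos by (intro mult_left_mono add_mono) auto
  qed
  also have "\<dots> = L / d * (1 + d) * dist x y" by (simp only: distrib_left distrib_right mult_1_left mult_1_right mult.assoc)
  finally show ?thesis .
qed

end



theorem lemma3:
  fixes d \<kappa> T L :: real
  assumes "0 < d" "d \<le> 1" "0 < \<kappa>" "0 < T"
  shows "\<exists>C. \<forall>(N1::nat) (N2::nat) (f :: real \<times> real \<Rightarrow> real) x y s t.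
           0 < N1 \<and> real N2 = d * real N1 \<and> \<kappa> / real N1 \<le> 1 \<and>
           L-lipschitz_on dom2 f \<and> f (0, 0) = 0 \<and> f (1, 1) = 0 \<and>
           x \<in> dom2 \<and> y \<in> dom2 \<and> s \<in> {0..T} \<and> t \<in> {0..T} \<longrightarrow>
             \<bar>uN d \<kappa> N1 N2 f t x - uN d \<kappa> N1 N2 f t y\<bar> \<le> C * dist x y \<and>
             \<bar>uN d \<kappa> N1 N2 f t x - uN d \<kappa> N1 N2 f s x\<bar> \<le> C * sqrt \<bar>t - s\<bar>"
proof -
  define C1 where "C1 = L / d * (1 + d)"
  define C2 where "C2 = 2 * (L * sqrt (2 * (1 + 1 / d + \<kappa>))) + L / d * (1 + d) * sqrt (1 + 1 / d + \<kappa>)"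
  show ?thesis
  proof (intro exI[of _ "C1 + C2"] allI impI)
    fix N1 N2 :: nat and f :: "real \<times> real \<Rightarrow> real" and x y :: "real \<times> real" and s t :: real
    assume H: "0 < N1 \<and> real N2 = d * real N1 \<and> \<kappa> / real N1 \<le> 1 \<and>
           L-lipschitz_on dom2 f \<and> f (0, 0) = 0 \<and> f (1, 1) = 0 \<and>
           x \<in> dom2 \<and> y \<in> dom2 \<and> s \<in> {0..T} \<and> t \<in> {0..T}"
    interpret setting d \<kappa> N1 N2
      by unfold_locales (use H assms in auto)
    have f: "L-lipschitz_on dom2 f" and x: "x \<in> dom2" and y: "y \<in> dom2"
      and s: "0 \<le> s" and t: "0 \<le> t" using H by auto
    have L: "0 \<le> L" using f by (rule lipschitz_on_nonneg)
    have C1: "0 \<le> C1" using L assms by (simp add: C1_def)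
    have C2: "0 \<le> C2" using L assms by (simp add: C2_def)
    have dxy: "0 \<le> dist x y" by simp
    have "\<bar>uN d \<kappa> N1 N2 f t x - uN d \<kappa> N1 N2 f t y\<bar> \<le> C1 * dist x y"
      unfolding C1_def by (rule space[OF f x y t])
    also have "\<dots> \<le> (C1 + C2) * dist x y" using C2 dxy by (intro mult_right_mono) auto
    finally have sp: "\<bar>uN d \<kappa> N1 N2 f t x - uN d \<kappa> N1 N2 f t y\<bar> \<le> (C1 + C2) * dist x y" .
    have tm: "\<bar>uN d \<kappa> N1 N2 f t x - uN d \<kappa> N1 N2 f s x\<bar> \<le> C2 * sqrt \<bar>t - s\<bar>"
    proof (cases "s \<le> t")
      case True
      have "\<bar>uN d \<kappa> N1 N2 f t x - uN d \<kappa> N1 N2 f s x\<bar> \<le> C2 * sqrt (t - s)"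
        unfolding C2_def by (rule time_le[OF f x s True])
      moreover have "\<bar>t - s\<bar> = t - s" using True by simp
      ultimately show ?thesis by simp
    next
      case False
      then have ts: "t \<le> s" by simp
      have "\<bar>uN d \<kappa> N1 N2 f s x - uN d \<kappa> N1 N2 f t x\<bar> \<le> C2 * sqrt (s - t)"
        unfolding C2_def by (rule time_le[OF f x t ts])
      moreover have "\<bar>t - s\<bar> = s - t" using ts by simp
      moreover have "\<bar>uN d \<kappa> N1 N2 f t x - uN d \<kappa> N1 N2 f s x\<bar> = \<bar>uN d \<kappa> N1 N2 f s x - uN d \<kappa> N1 N2 f t x\<bar>"
        by (rule abs_minus_commute)
      ultimately show ?thesis by simp
    qed
    also have "C2 * sqrt \<bar>t - s\<bar> \<le> (C1 + C2) * sqrt \<bar>t - s\<bar>" using C1 by (intro mult_right_mono) auto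
    finally show "\<bar>uN d \<kappa> N1 N2 f t x - uN d \<kappa> N1 N2 f t y\<bar> \<le> (C1 + C2) * dist x y \<and>
             \<bar>uN d \<kappa> N1 N2 f t x - uN d \<kappa> N1 N2 f s x\<bar> \<le> (C1 + C2) * sqrt \<bar>t - s\<bar>"
      using sp by simp
  qed
qed

end
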